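(* Let $\alpha\ge1$ and let $\Phi_\alpha^*(\xi)=\sup_{z\in\mathbb R}\{\xi z-\Phi_\alpha(z)\}$ be the Legendre transform of $\Phi_\alpha$. With $\tilde c_\alpha:=\big(\tfrac{2}{\alpha^2}\big)^{1/(\alpha-1)}\tfrac{\alpha-1}{\alpha}$ (for $\alpha>1$), for all $\xi\in\mathbb R$: (1) if $\alpha=1$: $\Phi_1^*(\xi)\le e^{\xi}-\xi-1$; (2) if $\alpha\in(1,2]$: $\Phi_\alpha^*(\xi)\le\max\big\{\tilde c_\alpha|\xi|^{\alpha/(\alpha-1)},\tfrac1{2\alpha}\xi^2\big\}$; (3) if $\alpha\ge2$: $\Phi_\alpha^*(\xi)\le\tilde c_\alpha|\xi|^{\alpha/(\alpha-1)}$. Moreover, for all $\alpha\ge1$, $\Phi_\alpha^*(\xi)\le\frac1{2\alpha}\xi^2$ whenever $|\xi|\le\alpha$.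
   Context: For $\alpha\ge1$, $\Phi_\alpha(z)=\big((z+1)^\alpha-1\big)\log\big((z+1)^\alpha\big)$ for $z>-1$ and $\Phi_\alpha(z)=+\infty$ for $z\le-1$. *)

theory Defs
  imports "HOL-Analysis.Analysis" "HOL-Library.Extended_Real"
begin

definition Phi :: "real \<Rightarrow> real \<Rightarrow> ereal" where
  "Phi \<alpha> z = (if z > -1
     then ereal (((z + 1) powr \<alpha> - 1) * ln ((z + 1) powr \<alpha>))
     else \<infinity>)"

definition Phi_star :: "real \<Rightarrow> real \<Rightarrow> ereal" where
  "Phi_star \<alpha> \<xi> = (SUP z\<in>(UNIV::real set). ereal (\<xi> * z) - Phi \<alpha> z)"

definition c_tilde :: "real \<Rightarrow> real" where
  "c_tilde \<alpha> = (2 / \<alpha>\<^sup>2) powr (1 / (\<alpha> - 1)) * ((\<alpha> - 1) / \<alpha>)"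

end

theory Submission
  imports Defs
begin

lemma ln_lower2:
  fixes z :: real assumes "z \<ge> 0" shows "2*z/(2+z) \<le> ln (1+z)"
proof -
  let ?g = "\<lambda>z::real. ln (1+z) - 2*z/(2+z)"
  have d: "(?g has_real_derivative (1/(1+x) - 4/(2+x)^2)) (at x)" if "x \<ge> 0" for x
    using that by (auto intro!: derivative_eq_intros simp: field_simps power2_eq_square)
  have nn: "1/(1+x) - 4/(2+x)^2 \<ge> 0" if "x \<ge> 0" for x::real
  proof -
    have "4*(1+x) \<le> (2+x)^2" by (simp add: power2_eq_square algebra_simps)
    then have "4/(2+x)^2 \<le> 1/(1+x)" using that by (simp add: field_simps)
    thus ?thesis by simp
  qed
  have "?g 0 \<le> ?g z"
    proof (rule DERIV_nonneg_imp_nondecreasing[of 0 z ?g])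
    fix x assume "0 \<le> x" "x \<le> z"
    then show "\<exists>y. (?g has_real_derivative y) (at x) \<and> 0 \<le> y" using d nn by blast
  qed (use assms in auto)
  thus ?thesis by simp
qed

lemma starle:
  assumes "\<And>z. z > -1 \<Longrightarrow> \<xi>*z - ((z+1) powr \<alpha> - 1) * ln ((z+1) powr \<alpha>) \<le> B"
  shows "Phi_star \<alpha> \<xi> \<le> ereal B"
  unfolding Phi_star_def
proof (rule SUP_least)
  fix z :: real
  show "ereal (\<xi> * z) - Phi \<alpha> z \<le> ereal B"
  proof (cases "z > -1")
    case True then show ?thesis using assms[OF True] by (simp add: Phi_def)
  qed (simp add: Phi_def)
qed

lemma P1:
  fixes u \<alpha> :: real assumes "u > 0" "\<alpha> \<ge> 1"
  shows "(u - 1) * ln u \<le> (u powr \<alpha> - 1) * ln u"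
proof (cases "u \<ge> 1")
  case True
  have "u powr 1 \<le> u powr \<alpha>" by (rule powr_mono) (use True assms in auto)
  then show ?thesis using True assms by (intro mult_right_mono) auto
next
  case False
  have "u powr \<alpha> \<le> u" by (rule powr_le_one_le) (use False assms in auto)
  moreover have "ln u \<le> 0" using False assms by simp
  ultimately show ?thesis by (intro mult_right_mono_neg) auto
qed

lemma P2:
  fixes z :: real assumes "z > -1" "z \<le> 1"
  shows "z^2/2 \<le> z * ln (z+1)"
proof (cases "z \<ge> 0")
  case True
  have "2*z/(2+z) \<le> ln (1+z)" by (rule ln_lower2) fact
  then have "z*(2*z/(2+z)) \<le> z * ln(1+z)" using True by (rule mult_left_mono)
  then have "z*(2*z/(2+z)) \<le> z * ln(z+1)" by (simp add: add.commute)
  moreover have "z^2/2 \<le> z*(2*z/(2+z))" using True assms by (simp add: field_simps power2_eq_square) (simp add: mult_left_mono)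
  ultimately show ?thesis by linarith
next
  case False
  have "ln (z+1) \<le> z" using ln_le_minus_one[of "z+1"] assms by simp
  then have "z*z \<le> z * ln(z+1)" using False by (simp add: mult_left_mono_neg)
  then show ?thesis using False by (simp add: power2_eq_square)
qed

lemma P3:
  fixes z \<alpha> :: real assumes "z > 1" "\<alpha> \<ge> 1"
  shows "z powr \<alpha> / 2 \<le> ((z+1) powr \<alpha> - 1) * ln (z+1)"
proof -
  have "(z+1) powr \<alpha> = (z+1) * (z+1) powr (\<alpha>-1)"
    using assms by (simp add: powr_diff)
  also have "\<dots> \<ge> (z+1) * z powr (\<alpha>-1)"
    using assms by (intro mult_left_mono powr_mono2) auto
  finally have a: "(z+1) powr \<alpha> \<ge> z * z powr (\<alpha>-1) + z powr (\<alpha>-1)" by (simp add: algebra_simps)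
  have "z * z powr (\<alpha>-1) = z powr \<alpha>" using assms by (simp add: powr_diff)
  moreover have "z powr (\<alpha>-1) \<ge> 1" using assms by (intro ge_one_powr_ge_zero) auto
  ultimately have b: "(z+1) powr \<alpha> - 1 \<ge> z powr \<alpha>" using a by linarith
  have "ln 2 \<le> ln (z+1)" using assms by simp
  then have c: "1/2 \<le> ln (z+1)" using ln2_ge_two_thirds by linarith
  have "z powr \<alpha> / 2 = z powr \<alpha> * (1/2)" by simp
  also have "\<dots> \<le> ((z+1) powr \<alpha> - 1) * ln (z+1)"
    proof (rule mult_mono)
    show "0 \<le> (z+1) powr \<alpha> - 1" using b powr_ge_zero[of z \<alpha>] by linarith
  qed (use b c in auto)
  finally show ?thesis .
qed


lemma Young_c:
  fixes \<alpha> \<xi> z :: real assumes a: "\<alpha> > 1"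
  shows "\<xi>*z - \<alpha>/2 * \<bar>z\<bar> powr \<alpha> \<le> c_tilde \<alpha> * \<bar>\<xi>\<bar> powr (\<alpha>/(\<alpha>-1))"
proof -
  define K where "K = \<alpha>^2/2"
  have K: "K > 0" using a by (simp add: K_def)
  define lam where "lam = K powr (1/\<alpha>)"
  have lam: "lam > 0" using K by (simp add: lam_def)
  define q where "q = \<alpha>/(\<alpha>-1)"
  have q: "q > 1" using a by (simp add: q_def field_simps)
  have pq: "1/\<alpha> + 1/q = 1" using a by (simp add: q_def field_simps)
  have Y: "(lam*\<bar>z\<bar>) * (\<bar>\<xi>\<bar>/lam) \<le> (lam*\<bar>z\<bar>) powr \<alpha> / \<alpha> + (\<bar>\<xi>\<bar>/lam) powr q / q"
    by (rule Youngs_inequality) (use a q pq lam in auto)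
  have e1: "(lam*\<bar>z\<bar>) * (\<bar>\<xi>\<bar>/lam) = \<bar>\<xi>*z\<bar>" using lam by (simp add: abs_mult)
  have e2: "(lam*\<bar>z\<bar>) powr \<alpha> / \<alpha> = \<alpha>/2 * \<bar>z\<bar> powr \<alpha>"
  proof -
    have "lam powr \<alpha> = K" using K a by (simp add: lam_def powr_powr)
    moreover have "(lam*\<bar>z\<bar>) powr \<alpha> = lam powr \<alpha> * \<bar>z\<bar> powr \<alpha>" using lam by (simp add: powr_mult)
    ultimately show ?thesis using a by (simp add: K_def power2_eq_square field_simps)
  qed
  have e3: "(\<bar>\<xi>\<bar>/lam) powr q / q = c_tilde \<alpha> * \<bar>\<xi>\<bar> powr (\<alpha>/(\<alpha>-1))"
  proof -
    have "lam powr q = K powr (1/(\<alpha>-1))" using K a by (simp add: lam_def powr_powr q_def)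
    moreover have "(2/\<alpha>^2) powr (1/(\<alpha>-1)) = 1 / K powr (1/(\<alpha>-1))"
      using a by (simp add: K_def powr_divide)
    ultimately show ?thesis using lam a
      by (simp add: powr_divide c_tilde_def q_def field_simps)
  qed
  have "\<xi>*z \<le> \<bar>\<xi>*z\<bar>" by simp
  then show ?thesis using Y e1 e2 e3 by linarith
qed


lemma E_le:
  fixes z \<alpha> \<xi> Q :: real
  assumes "z > -1" "\<alpha> \<ge> 1" "Q \<le> ((z+1) powr \<alpha> - 1) * ln (z+1)"
  shows "\<xi>*z - ((z+1) powr \<alpha> - 1) * ln ((z+1) powr \<alpha>) \<le> \<xi>*z - \<alpha>*Q"
proof -
  have "ln ((z+1) powr \<alpha>) = \<alpha> * ln (z+1)" using assms by (simp add: ln_powr)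
  moreover have "\<alpha>*Q \<le> \<alpha> * (((z+1) powr \<alpha> - 1) * ln (z+1))"
    using assms by (intro mult_left_mono) auto
  ultimately show ?thesis by (simp add: algebra_simps)
qed

lemma part1: "Phi_star 1 \<xi> \<le> ereal (exp \<xi> - \<xi> - 1)"
proof (rule starle)
  fix z :: real assume z: "z > -1"
  have u: "z + 1 > 0" using z by simp
  define L where "L = ln (z+1)"
  have Lz: "L \<le> z" using ln_le_minus_one[OF u] by (simp add: L_def)
  have "exp (\<xi> - L) \<ge> 1 + (\<xi> - L)" by (rule exp_ge_add_one_self)
  moreover have "exp (\<xi> - L) = exp \<xi> / (z+1)" using u by (simp add: L_def exp_diff)
  ultimately have "exp \<xi> \<ge> (z+1) * (1 + \<xi> - L)" using u by (simp add: field_simps)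
  then have h: "exp \<xi> \<ge> z + 1 + z*\<xi> + \<xi> - z*L - L" by (simp add: algebra_simps)
  have "((z+1) powr 1 - 1) * ln ((z+1) powr 1) = z * L" using u by (simp add: L_def)
  then show "\<xi> * z - ((z + 1) powr 1 - 1) * ln ((z + 1) powr 1) \<le> exp \<xi> - \<xi> - 1"
    using h Lz by (simp add: algebra_simps)
qed

lemma small_z:
  fixes z \<alpha> \<xi> :: real
  assumes "z > -1" "z \<le> 1" "\<alpha> \<ge> 1"
  shows "\<xi>*z - ((z+1) powr \<alpha> - 1) * ln ((z+1) powr \<alpha>) \<le> \<xi>^2/(2*\<alpha>)"
proof -
  have "z^2/2 \<le> ((z+1) powr \<alpha> - 1) * ln (z+1)"
    using P2[of z] P1[of "z+1" \<alpha>] assms by simp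
  then have "\<xi>*z - ((z+1) powr \<alpha> - 1) * ln ((z+1) powr \<alpha>) \<le> \<xi>*z - \<alpha>*(z^2/2)"
    using assms by (intro E_le) auto
  also have "\<dots> \<le> \<xi>^2/(2*\<alpha>)"
  proof -
    have "0 \<le> (\<xi> - \<alpha>*z)^2" by simp
    then have "\<alpha>*(\<xi>*z - \<alpha>*(z^2/2)) \<le> \<xi>^2/2" by (simp add: power2_eq_square algebra_simps)
    then show ?thesis using assms by (simp add: field_simps)
  qed
  finally show ?thesis .
qed

lemma part4:
  fixes \<alpha> \<xi> :: real
  assumes "\<alpha> \<ge> 1" "\<bar>\<xi>\<bar> \<le> \<alpha>"
  shows "Phi_star \<alpha> \<xi> \<le> ereal (\<xi>^2/(2*\<alpha>))"
proof (rule starle)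
  fix z :: real assume z: "z > -1"
  show "\<xi>*z - ((z+1) powr \<alpha> - 1) * ln ((z+1) powr \<alpha>) \<le> \<xi>^2/(2*\<alpha>)"
  proof (cases "z \<le> 1")
    case True then show ?thesis using small_z z assms by blast
  next
    case False
    have l: "2*z/(2+z) \<le> ln (1+z)" by (rule ln_lower2) (use False in auto)
    have "z*(2*z/(2+z)) \<le> z * ln (1+z)" using l False by (intro mult_left_mono) auto
    moreover have "z - 1/2 \<le> z*(2*z/(2+z))"
    proof -
      have "(z - 1/2)*(2+z) \<le> 2*z*z" 
      proof -
        have "0 \<le> (z - 3/4)^2" by simp
        then have "3/2*z - 9/16 \<le> z*z" by (simp add: power2_eq_square algebra_simps)
        moreover have "(z - 1/2)*(2+z) = z*z + 3/2*z - 1" by (simp add: field_simps)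
        ultimately show ?thesis by linarith
      qed
      then show ?thesis using False by (simp add: field_simps)
    qed
    moreover have "(z + 1 - 1) * ln (z+1) \<le> ((z+1) powr \<alpha> - 1) * ln (z+1)"
      by (rule P1) (use False assms in auto)
    moreover have "ln (1+z) = ln (z+1)" by (simp add: add.commute)
    ultimately have "z - 1/2 \<le> ((z+1) powr \<alpha> - 1) * ln (z+1)" by simp
    then have "\<xi>*z - ((z+1) powr \<alpha> - 1) * ln ((z+1) powr \<alpha>) \<le> \<xi>*z - \<alpha>*(z - 1/2)"
      using assms z by (intro E_le) auto
    also have "\<dots> \<le> \<xi>^2/(2*\<alpha>)"
    proof -
      have "2*\<alpha>*1 \<le> 2*\<alpha>*z" using False assms by (intro mult_left_mono) auto
      then have h2: "0 \<le> 2*\<alpha>*z - (\<alpha>+\<xi>)" using assms by linarith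
      have "0 \<le> \<alpha> - \<xi>" using assms by linarith
      then have h3: "0 \<le> (\<alpha> - \<xi>) * (2*\<alpha>*z - (\<alpha>+\<xi>))" using h2
        by (rule mult_nonneg_nonneg)
      have "(\<alpha> - \<xi>) * (2*\<alpha>*z - (\<alpha>+\<xi>)) + 2*\<alpha>*(\<xi>*z - \<alpha>*(z - 1/2)) = \<xi>^2"
        by (simp add: algebra_simps power2_eq_square)
      then have "2*\<alpha>*(\<xi>*z - \<alpha>*(z - 1/2)) \<le> \<xi>^2" using h3 by linarith
      then show ?thesis using assms by (simp add: pos_le_divide_eq mult.commute)
    qed
    finally show ?thesis .
  qed
qed

lemma big_z:
  fixes z \<alpha> \<xi> :: real
  assumes "z > 1" "\<alpha> > 1"
  shows "\<xi>*z - ((z+1) powr \<alpha> - 1) * ln ((z+1) powr \<alpha>) \<le> c_tilde \<alpha> * \<bar>\<xi>\<bar> powr (\<alpha>/(\<alpha>-1))"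
proof -
  have "\<xi>*z - ((z+1) powr \<alpha> - 1) * ln ((z+1) powr \<alpha>) \<le> \<xi>*z - \<alpha>*(z powr \<alpha> / 2)"
    using assms P3[of z \<alpha>] by (intro E_le) auto
  also have "\<dots> = \<xi>*z - \<alpha>/2 * \<bar>z\<bar> powr \<alpha>" using assms by simp
  also have "\<dots> \<le> c_tilde \<alpha> * \<bar>\<xi>\<bar> powr (\<alpha>/(\<alpha>-1))" by (rule Young_c) fact
  finally show ?thesis .
qed

lemma part2:
  fixes \<alpha> \<xi> :: real
  assumes "1 < \<alpha>"
  shows "Phi_star \<alpha> \<xi> \<le> ereal (max (c_tilde \<alpha> * \<bar>\<xi>\<bar> powr (\<alpha> / (\<alpha> - 1))) (\<xi>\<^sup>2 / (2 * \<alpha>)))"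
proof (rule starle)
  fix z :: real assume z: "z > -1"
  show "\<xi>*z - ((z+1) powr \<alpha> - 1) * ln ((z+1) powr \<alpha>) \<le> max (c_tilde \<alpha> * \<bar>\<xi>\<bar> powr (\<alpha> / (\<alpha> - 1))) (\<xi>\<^sup>2 / (2 * \<alpha>))"
  proof (cases "z \<le> 1")
    case True
    have "\<xi>*z - ((z+1) powr \<alpha> - 1) * ln ((z+1) powr \<alpha>) \<le> \<xi>^2/(2*\<alpha>)"
      by (rule small_z) (use True z assms in auto)
    then show ?thesis by (rule order_trans) (rule max.cobounded2)
  next
    case False
    have "\<xi>*z - ((z+1) powr \<alpha> - 1) * ln ((z+1) powr \<alpha>) \<le> c_tilde \<alpha> * \<bar>\<xi>\<bar> powr (\<alpha>/(\<alpha>-1))"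
      by (rule big_z) (use False assms in auto)
    then show ?thesis by (rule order_trans) (rule max.cobounded1)
  qed
qed

lemma part3:
  fixes \<alpha> \<xi> :: real
  assumes "2 \<le> \<alpha>"
  shows "Phi_star \<alpha> \<xi> \<le> ereal (c_tilde \<alpha> * \<bar>\<xi>\<bar> powr (\<alpha> / (\<alpha> - 1)))"
proof (rule starle)
  fix z :: real assume z: "z > -1"
  show "\<xi>*z - ((z+1) powr \<alpha> - 1) * ln ((z+1) powr \<alpha>) \<le> c_tilde \<alpha> * \<bar>\<xi>\<bar> powr (\<alpha> / (\<alpha> - 1))"
  proof (cases "z \<le> 1")
    case True
    have zz: "\<bar>z\<bar> \<le> 1" using True z by simp
    have "\<bar>z\<bar> powr \<alpha> \<le> \<bar>z\<bar> powr 2"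
    proof (cases "z = 0")
      case False
      then show ?thesis using zz assms by (intro powr_mono') auto
    qed simp
    also have "\<dots> = z^2" by (simp add: powr_numeral)
    finally have zp: "\<bar>z\<bar> powr \<alpha> / 2 \<le> z^2/2" by simp
    have "(\<bar>z\<bar> powr \<alpha>)/2 \<le> ((z+1) powr \<alpha> - 1) * ln (z+1)"
      using P2[of z] P1[of "z+1" \<alpha>] zp z True assms by simp
    then have "\<xi>*z - ((z+1) powr \<alpha> - 1) * ln ((z+1) powr \<alpha>) \<le> \<xi>*z - \<alpha>*(\<bar>z\<bar> powr \<alpha> / 2)"
      using assms z by (intro E_le) auto
    also have "\<dots> = \<xi>*z - \<alpha>/2 * \<bar>z\<bar> powr \<alpha>" by simp
    also have "\<dots> \<le> c_tilde \<alpha> * \<bar>\<xi>\<bar> powr (\<alpha>/(\<alpha>-1))" by (rule Young_c) (use assms in simp)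
    finally show ?thesis .
  next
    case False show ?thesis by (rule big_z) (use False assms in auto)
  qed
qed

theorem mainTheorem8:
  fixes \<alpha> \<xi> :: real
  assumes "\<alpha> \<ge> 1"
  shows "(\<alpha> = 1 \<longrightarrow> Phi_star 1 \<xi> \<le> ereal (exp \<xi> - \<xi> - 1))
       \<and> (1 < \<alpha> \<and> \<alpha> \<le> 2 \<longrightarrow>
            Phi_star \<alpha> \<xi> \<le> ereal (max (c_tilde \<alpha> * \<bar>\<xi>\<bar> powr (\<alpha> / (\<alpha> - 1))) (\<xi>\<^sup>2 / (2 * \<alpha>))))
       \<and> (\<alpha> \<ge> 2 \<longrightarrow> Phi_star \<alpha> \<xi> \<le> ereal (c_tilde \<alpha> * \<bar>\<xi>\<bar> powr (\<alpha> / (\<alpha> - 1))))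
       \<and> (\<bar>\<xi>\<bar> \<le> \<alpha> \<longrightarrow> Phi_star \<alpha> \<xi> \<le> ereal (\<xi>\<^sup>2 / (2 * \<alpha>)))"
proof (intro conjI impI)
  show "Phi_star 1 \<xi> \<le> ereal (exp \<xi> - \<xi> - 1)" by (rule part1)
next
  assume "1 < \<alpha> \<and> \<alpha> \<le> 2"
  then show "Phi_star \<alpha> \<xi> \<le> ereal (max (c_tilde \<alpha> * \<bar>\<xi>\<bar> powr (\<alpha> / (\<alpha> - 1))) (\<xi>\<^sup>2 / (2 * \<alpha>)))"
    by (intro part2) simp
next
  assume "2 \<le> \<alpha>"
  then show "Phi_star \<alpha> \<xi> \<le> ereal (c_tilde \<alpha> * \<bar>\<xi>\<bar> powr (\<alpha> / (\<alpha> - 1)))"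
    by (rule part3)
next
  assume "\<bar>\<xi>\<bar> \<le> \<alpha>"
  then show "Phi_star \<alpha> \<xi> \<le> ereal (\<xi>\<^sup>2 / (2 * \<alpha>))"
    using assms by (intro part4)
qed

end
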